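(* Let $Q$ be a quantity space over a field $K$ with a basis $E=\{e_1,\ldots,e_n\}$. Then the subset $U=\{1\cdot\prod_{i=1}^n e_i^{k_i}\mid k_1,\ldots,k_n\in\mathbb{Z}\}$ of $Q$ is a coherent system of unit quantities for $Q$.
   Context: A scalable monoid over a (unital, associative) ring $R$ is a monoid $X$ (identity $1_X$, product written $xy$) together with a map $R\times X\to X$, $(\alpha,x)\mapsto\alpha\cdot x$, such that $1\cdot x=x$, $\alpha\cdot(\beta\cdot x)=\alpha\beta\cdot x$ and $\alpha\cdot(xy)=(\alpha\cdot x)y=x(\alpha\cdot y)$. A quantity space over a field $K$ is a commutative scalable monoid $Q$ over $K$ for which there exists a basis, i.e. a finite set $\{e_1,\ldots,e_n\}$ of invertible elements of $Q$ such that every $x\in Q$ has a unique expansion $x=\mu\cdot\prod_{i=1}^n e_i^{k_i}$ with $\mu\in K$ and $k_i\in\mathbb{Z}$. On $Q$, $x\sim y$ iff $\alpha\cdot x=\beta\cdot y$ for some $\alpha,\beta\in K$. A unit element (unit quantity) is an element $u$ such that every $x\sim u$ equals $\lambda\cdot u$ for some $\lambda\in K$ and $\lambda\cdot u=\lambda'\cdot u$ implies $\lambda=\lambda'$. A set $U\subseteq Q$ is dense if for every $x\in Q$ there is $u\in U$ with $u\sim x$, and sparse if $u\sim v$ implies $u=v$ for $u,v\in U$. A coherent system of unit quantities is a submonoid of $Q$ that is a dense and sparse set of unit elements. *)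

theory Defs
  imports Main
begin

definition scalable_monoid :: "('k::ring_1 \<Rightarrow> 'q::monoid_mult \<Rightarrow> 'q) \<Rightarrow> bool" where
  "scalable_monoid smul \<longleftrightarrow>
     (\<forall>x. smul 1 x = x) \<and>
     (\<forall>a b x. smul a (smul b x) = smul (a * b) x) \<and>
     (\<forall>a x y. smul a (x * y) = smul a x * y \<and> smul a (x * y) = x * smul a y)"

definition invertible :: "'q::monoid_mult \<Rightarrow> bool" where
  "invertible x \<longleftrightarrow> (\<exists>y. x * y = 1 \<and> y * x = 1)"

definition minv :: "'q::monoid_mult \<Rightarrow> 'q" where
  "minv x = (THE y. x * y = 1 \<and> y * x = 1)"

definition zpow :: "'q::monoid_mult \<Rightarrow> int \<Rightarrow> 'q" where
  "zpow x k = (if 0 \<le> k then x ^ nat k else minv x ^ nat (- k))"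

definition is_basis :: "('k::field \<Rightarrow> 'q::comm_monoid_mult \<Rightarrow> 'q) \<Rightarrow> 'q set \<Rightarrow> bool" where
  "is_basis smul E \<longleftrightarrow>
     finite E \<and> (\<forall>e\<in>E. invertible e) \<and>
     (\<forall>x. \<exists>\<mu> k. x = smul \<mu> (\<Prod>e\<in>E. zpow e (k e))) \<and>
     (\<forall>\<mu> k \<mu>' k'. smul \<mu> (\<Prod>e\<in>E. zpow e (k e)) = smul \<mu>' (\<Prod>e\<in>E. zpow e (k' e))
        \<longrightarrow> \<mu> = \<mu>' \<and> (\<forall>e\<in>E. k e = k' e))"

definition quantity_space :: "('k::field \<Rightarrow> 'q::comm_monoid_mult \<Rightarrow> 'q) \<Rightarrow> bool" where
  "quantity_space smul \<longleftrightarrow> scalable_monoid smul \<and> (\<exists>E. is_basis smul E)"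

definition qsim :: "('k \<Rightarrow> 'q \<Rightarrow> 'q) \<Rightarrow> 'q \<Rightarrow> 'q \<Rightarrow> bool" where
  "qsim smul x y \<longleftrightarrow> (\<exists>a b. smul a x = smul b y)"

definition unit_element :: "('k \<Rightarrow> 'q \<Rightarrow> 'q) \<Rightarrow> 'q \<Rightarrow> bool" where
  "unit_element smul u \<longleftrightarrow>
     (\<forall>x. qsim smul x u \<longrightarrow> (\<exists>l. x = smul l u)) \<and>
     (\<forall>l l'. smul l u = smul l' u \<longrightarrow> l = l')"

definition dense_set :: "('k \<Rightarrow> 'q \<Rightarrow> 'q) \<Rightarrow> 'q set \<Rightarrow> bool" where
  "dense_set smul U \<longleftrightarrow> (\<forall>x. \<exists>u\<in>U. qsim smul u x)"

definition sparse_set :: "('k \<Rightarrow> 'q \<Rightarrow> 'q) \<Rightarrow> 'q set \<Rightarrow> bool" where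
  "sparse_set smul U \<longleftrightarrow> (\<forall>u\<in>U. \<forall>v\<in>U. qsim smul u v \<longrightarrow> u = v)"

definition submonoid :: "'q::monoid_mult set \<Rightarrow> bool" where
  "submonoid U \<longleftrightarrow> 1 \<in> U \<and> (\<forall>x\<in>U. \<forall>y\<in>U. x * y \<in> U)"

definition coherent_system :: "('k \<Rightarrow> 'q::monoid_mult \<Rightarrow> 'q) \<Rightarrow> 'q set \<Rightarrow> bool" where
  "coherent_system smul U \<longleftrightarrow> submonoid U \<and> dense_set smul U \<and> sparse_set smul U \<and>
     (\<forall>u\<in>U. unit_element smul u)"

end

theory Submission
  imports Defs
begin

lemma minv_ok:
  fixes x :: "'q::comm_monoid_mult"
  assumes "invertible x"
  shows "x * minv x = 1"
proof -
  obtain y where y: "x * y = 1 \<and> y * x = 1" using assms unfolding invertible_def by blast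
  have "\<exists>!y. x * y = 1 \<and> y * x = 1"
  proof (rule ex1I[of _ y])
    show "x * y = 1 \<and> y * x = 1" by fact
    fix z assume z: "x * z = 1 \<and> z * x = 1"
    have "z = z * (x * y)" using y by simp
    also have "\<dots> = (z * x) * y" by (simp add: mult.assoc)
    also have "\<dots> = y" using z by simp
    finally show "z = y" .
  qed
  from theI'[OF this] show ?thesis unfolding minv_def by blast
qed

lemma pow_cancel:
  fixes x :: "'q::comm_monoid_mult"
  assumes "x * y = 1"
  shows "x ^ n * y ^ m = (if m \<le> n then x ^ (n - m) else y ^ (m - n))"
proof (cases "m \<le> n")
  case True
  have "x ^ n * y ^ m = x ^ (n - m) * (x ^ m * y ^ m)"
    using True by (metis le_add_diff_inverse2 mult.assoc power_add)
  also have "x ^ m * y ^ m = 1" by (metis assms power_mult_distrib power_one)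
  finally show ?thesis using True by simp
next
  case False
  have "x ^ n * y ^ m = y ^ (m - n) * (x ^ n * y ^ n)"
    using False by (metis le_add_diff_inverse2 nat_le_linear mult.assoc mult.commute power_add)
  also have "x ^ n * y ^ n = 1" by (metis assms power_mult_distrib power_one)
  finally show ?thesis using False by simp
qed

lemma zpow_alt:
  fixes x :: "'q::comm_monoid_mult"
  shows "zpow x a = x ^ nat a * minv x ^ nat (- a)"
  unfolding zpow_def by auto

lemma zpow_add:
  fixes x :: "'q::comm_monoid_mult"
  assumes "invertible x"
  shows "zpow x a * zpow x b = zpow x (a + b)"
proof -
  let ?y = "minv x"
  have xy: "x * ?y = 1" using minv_ok[OF assms] .
  have "zpow x a * zpow x b = x ^ (nat a + nat b) * ?y ^ (nat (-a) + nat (-b))"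
    unfolding zpow_alt power_add by (simp add: ac_simps)
  also have "\<dots> = zpow x (a + b)"
  proof -
    let ?n = "nat a + nat b" and ?m = "nat (-a) + nat (-b)"
    have e: "int ?n - int ?m = a + b" by simp
    show ?thesis
    proof (cases "?m \<le> ?n")
      case True
      then have "0 \<le> a + b" "nat (a + b) = ?n - ?m" using e by linarith+
      then show ?thesis unfolding pow_cancel[OF xy] zpow_def using True by simp
    next
      case False
      then have "\<not> 0 \<le> a + b" "nat (-(a + b)) = ?m - ?n" using e by linarith+
      then show ?thesis unfolding pow_cancel[OF xy] zpow_def using False by simp
    qed
  qed
  finally show ?thesis .
qed

theorem proposition3p10:
  fixes smul :: "'k::field \<Rightarrow> 'q::comm_monoid_mult \<Rightarrow> 'q"
    and E :: "'q set"
  assumes "quantity_space smul"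
    and "is_basis smul E"
  shows "coherent_system smul {smul 1 (\<Prod>e\<in>E. zpow e (k e)) | k :: 'q \<Rightarrow> int. True}"
proof -
  have one: "\<And>x. smul 1 x = x" and ass: "\<And>a b x. smul a (smul b x) = smul (a * b) x"
    using assms(1) unfolding quantity_space_def scalable_monoid_def by auto
  have inv: "\<And>e. e \<in> E \<Longrightarrow> invertible e"
    and ex: "\<And>x. \<exists>\<mu> k. x = smul \<mu> (\<Prod>e\<in>E. zpow e (k e))"
    and uq: "\<And>\<mu> k \<mu>' k'. smul \<mu> (\<Prod>e\<in>E. zpow e (k e)) = smul \<mu>' (\<Prod>e\<in>E. zpow e (k' e))
        \<Longrightarrow> \<mu> = \<mu>' \<and> (\<forall>e\<in>E. k e = k' e)"
    using assms(2) unfolding is_basis_def by blast+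
  define P where "P k = (\<Prod>e\<in>E. zpow e (k e))" for k :: "'q \<Rightarrow> int"
  have U: "{smul 1 (\<Prod>e\<in>E. zpow e (k e)) | k :: 'q \<Rightarrow> int. True} = range P"
    unfolding P_def one by auto
  have Peq: "P k = P k'" if "\<forall>e\<in>E. k e = k' e" for k k'
    unfolding P_def using that by (intro prod.cong) auto
  have uq': "smul a (P k) = smul b (P k') \<Longrightarrow> a = b \<and> P k = P k'" for a b k k'
    using uq[of a k b k'] Peq unfolding P_def by blast
  have sub: "submonoid (range P)"
    unfolding submonoid_def
  proof
    have "P (\<lambda>_. 0) = 1" unfolding P_def zpow_def by simp
    then show "1 \<in> range P" by (metis rangeI)
    show "\<forall>x\<in>range P. \<forall>y\<in>range P. x * y \<in> range P"
    proof (intro ballI)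
      fix x y assume "x \<in> range P" "y \<in> range P"
      then obtain k k' where "x = P k" "y = P k'" by auto
      then have "x * y = P (\<lambda>e. k e + k' e)"
        unfolding P_def prod.distrib[symmetric] using inv zpow_add
        by (simp add: prod.distrib[symmetric] zpow_add inv cong: prod.cong)
      then show "x * y \<in> range P" by auto
    qed
  qed
  have dense: "dense_set smul (range P)"
    unfolding dense_set_def qsim_def
  proof
    fix x
    obtain \<mu> k where x: "x = smul \<mu> (P k)" using ex unfolding P_def by blast
    show "\<exists>u\<in>range P. \<exists>a b. smul a u = smul b x"
    proof (rule bexI[of _ "P k"])
      have "smul \<mu> (P k) = smul 1 x" using x one by simp
      then show "\<exists>a b. smul a (P k) = smul b x" by blast
    qed auto
  qed
  have sparse: "sparse_set smul (range P)"
    unfolding sparse_set_def qsim_def using uq' by blast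
  have unit: "unit_element smul u" if "u \<in> range P" for u
  proof -
    obtain k where u: "u = P k" using \<open>u \<in> range P\<close> by auto
    show ?thesis unfolding unit_element_def qsim_def
    proof (intro conjI allI impI)
      fix x assume "\<exists>a b. smul a x = smul b u"
      then obtain a b where ab: "smul a x = smul b u" by blast
      obtain \<mu> j where x: "x = smul \<mu> (P j)" using ex unfolding P_def by blast
      have "smul (a * \<mu>) (P j) = smul b (P k)" using ab x u ass by simp
      then have "P j = P k" using uq' by blast
      then show "\<exists>l. x = smul l u" using x u by metis
    next
      fix l l' assume "smul l u = smul l' u"
      then show "l = l'" using uq' u by blast
    qed
  qed
  show ?thesis unfolding U coherent_system_def using sub dense sparse unit by blast
qed

end
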